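(* Let $(\varphi,\mathcal A,V)$ be a linear system with $\dim V=1$ (so $\varphi(a)$ is a scalar multiple of the identity for each $a$). Then the universal dilation of $(\varphi,\mathcal A,V)$ is equivalent to its principle (canonical) dilation if and only if $\ker\varphi$ contains no nonzero left ideal of $\mathcal A$.
   Context: Fix a field $\mathbb F$; all algebras and vector spaces are over $\mathbb F$, and $L(X)$ is the algebra of linear maps $X\to X$. A linear system $(\varphi,\mathcal A,V)$: $\mathcal A$ a unital associative algebra with unit $I$, $V$ a vector space, $\varphi:\mathcal A\to L(V)$ linear with $\varphi(I)=\mathrm{id}_V$. A homomorphism dilation system $(\pi,S,T,W)$: $W$ a vector space, $\pi:\mathcal A\to L(W)$ a unital homomorphism, $T:V\to W$ injective linear, $S:W\to V$ surjective linear, $\varphi(a)=S\pi(a)T$ for all $a$. Two linearly minimal systems (i.e. with $W=\mathrm{span}\{\pi(a)Tv\}$) are equivalent if there is a bijective linear $R:W_1\to W_2$ with $RT_1=T_2$, $S_2R=S_1$, $\pi_1(a)=R^{-1}\pi_2(a)R$ for all $a$. The universal dilation is $(\pi_u,S_u,T_u,\mathcal A\otimes V)$ with $\pi_u(a)(b\otimes x)=(ab)\otimes x$, $T_ux=I\otimes x$, $S_u(a\otimes x)=\varphi(a)x$. Canonical dilation: $\alpha_{a,x}\in L(\mathcal A,V)$, $\alpha_{a,x}(b)=\varphi(ba)x$; $W_c=\mathrm{span}\{\alpha_{a,x}\}$; $\pi_c(a)\alpha_{b,x}=\alpha_{ab,x}$; $T_cx=\alpha_{I,x}$; $S_c(\alpha_{a,x})=\varphi(a)x$.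 *)

theory Defs
  imports Main "HOL.Vector_Spaces" "HOL-Library.Function_Algebras"
begin

text \<open>A unital associative algebra over the field 'f: the ring_1 structure of 'a
  gives associativity and unit; sA is the scalar multiplication.\<close>
definition unital_algebra :: "('f::field \<Rightarrow> 'a::ring_1 \<Rightarrow> 'a) \<Rightarrow> bool" where
  "unital_algebra sA \<longleftrightarrow> vector_space sA \<and>
     (\<forall>c a b. sA c (a * b) = sA c a * b \<and> sA c (a * b) = a * sA c b)"

definition linear_system ::
  "('f::field \<Rightarrow> 'a::ring_1 \<Rightarrow> 'a) \<Rightarrow> ('f \<Rightarrow> 'v::ab_group_add \<Rightarrow> 'v) \<Rightarrow> ('a \<Rightarrow> 'v \<Rightarrow> 'v) \<Rightarrow> bool" where
  "linear_system sA sV phi \<longleftrightarrow> unital_algebra sA \<and> vector_space sV \<and>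
     (\<forall>a. Vector_Spaces.linear sV sV (phi a)) \<and>
     (\<forall>a b v. phi (a + b) v = phi a v + phi b v) \<and>
     (\<forall>c a v. phi (sA c a) v = sV c (phi a v)) \<and>
     phi 1 = id"

definition ker_phi :: "('a \<Rightarrow> 'v::zero \<Rightarrow> 'v) \<Rightarrow> 'a set" where
  "ker_phi phi = {a. \<forall>v. phi a v = 0}"

definition left_ideal :: "('f::field \<Rightarrow> 'a::ring_1 \<Rightarrow> 'a) \<Rightarrow> 'a set \<Rightarrow> bool" where
  "left_ideal sA J \<longleftrightarrow> module.subspace sA J \<and> (\<forall>a j. j \<in> J \<longrightarrow> a * j \<in> J)"

definition tensor_product ::
  "('f::field \<Rightarrow> 'a::ring_1 \<Rightarrow> 'a) \<Rightarrow> ('f \<Rightarrow> 'v::ab_group_add \<Rightarrow> 'v) \<Rightarrow> ('f \<Rightarrow> 'w::ab_group_add \<Rightarrow> 'w)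
    \<Rightarrow> ('a \<Rightarrow> 'v \<Rightarrow> 'w) \<Rightarrow> bool" where
  "tensor_product sA sV sW t \<longleftrightarrow> vector_space sW \<and>
     (\<forall>x. Vector_Spaces.linear sA sW (\<lambda>a. t a x)) \<and> (\<forall>a. Vector_Spaces.linear sV sW (t a)) \<and>
     module.span sW {t a x | a x. True} = UNIV \<and>
     (\<forall>\<beta> :: 'a \<Rightarrow> 'v \<Rightarrow> 'f.
        (\<forall>x. Vector_Spaces.linear sA (*) (\<lambda>a. \<beta> a x)) \<and> (\<forall>a. Vector_Spaces.linear sV (*) (\<beta> a)) \<longrightarrow>
        (\<exists>f. Vector_Spaces.linear sW (*) f \<and> (\<forall>a x. f (t a x) = \<beta> a x)))"

definition dilation_equiv ::
  "('f \<Rightarrow> 'w1::ab_group_add \<Rightarrow> 'w1) \<Rightarrow> 'w1 set \<Rightarrow> ('a \<Rightarrow> 'w1 \<Rightarrow> 'w1) \<Rightarrow> ('w1 \<Rightarrow> 'v) \<Rightarrow> ('v \<Rightarrow> 'w1)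
   \<Rightarrow> ('f \<Rightarrow> 'w2::ab_group_add \<Rightarrow> 'w2) \<Rightarrow> 'w2 set \<Rightarrow> ('a \<Rightarrow> 'w2 \<Rightarrow> 'w2) \<Rightarrow> ('w2 \<Rightarrow> 'v) \<Rightarrow> ('v \<Rightarrow> 'w2)
   \<Rightarrow> bool" where
  "dilation_equiv s1 W1 pi1 S1 T1 s2 W2 pi2 S2 T2 \<longleftrightarrow>
     (\<exists>R. bij_betw R W1 W2 \<and>
        (\<forall>u\<in>W1. \<forall>w\<in>W1. R (u + w) = R u + R w) \<and>
        (\<forall>c. \<forall>u\<in>W1. R (s1 c u) = s2 c (R u)) \<and>
        (\<forall>x. R (T1 x) = T2 x) \<and>
        (\<forall>w\<in>W1. S2 (R w) = S1 w) \<and>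
        (\<forall>a. \<forall>w\<in>W1. pi1 a w = inv_into W1 R (pi2 a (R w))))"

text \<open>Canonical (principal) dilation, living in L(A,V) = 'a \<Rightarrow> 'v.\<close>
definition fun_scale :: "('f \<Rightarrow> 'v \<Rightarrow> 'v) \<Rightarrow> 'f \<Rightarrow> ('a \<Rightarrow> 'v) \<Rightarrow> ('a \<Rightarrow> 'v)" where
  "fun_scale sV c f = (\<lambda>b. sV c (f b))"

definition canon_alpha :: "('a::times \<Rightarrow> 'v \<Rightarrow> 'v) \<Rightarrow> 'a \<Rightarrow> 'v \<Rightarrow> ('a \<Rightarrow> 'v)" where
  "canon_alpha phi a x = (\<lambda>b. phi (b * a) x)"

definition canon_space :: "('f::field \<Rightarrow> 'v::ab_group_add \<Rightarrow> 'v) \<Rightarrow> ('a::times \<Rightarrow> 'v \<Rightarrow> 'v) \<Rightarrow> ('a \<Rightarrow> 'v) set" where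
  "canon_space sV phi = module.span (fun_scale sV) {canon_alpha phi a x | a x. True}"

text \<open>pi_c(a) alpha_{b,x} = alpha_{ab,x}; linear extension: f \<mapsto> (b \<mapsto> f (b a)).\<close>
definition canon_pi :: "'a::times \<Rightarrow> ('a \<Rightarrow> 'v) \<Rightarrow> ('a \<Rightarrow> 'v)" where
  "canon_pi a f = (\<lambda>b. f (b * a))"

definition canon_T :: "('a::monoid_mult \<Rightarrow> 'v \<Rightarrow> 'v) \<Rightarrow> 'v \<Rightarrow> ('a \<Rightarrow> 'v)" where
  "canon_T phi x = canon_alpha phi 1 x"

text \<open>S_c alpha_{a,x} = phi(a) x = alpha_{a,x}(I); linear extension: f \<mapsto> f I.\<close>
definition canon_S :: "('a::one \<Rightarrow> 'v) \<Rightarrow> 'v" where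
  "canon_S f = f 1"

end

theory Submission
  imports Defs
begin

theorem corollary4p3:
  fixes sA :: "'f::field \<Rightarrow> 'a::ring_1 \<Rightarrow> 'a"
    and sV :: "'f \<Rightarrow> 'v::ab_group_add \<Rightarrow> 'v"
    and phi :: "'a \<Rightarrow> 'v \<Rightarrow> 'v"
    and sW :: "'f \<Rightarrow> 'w::ab_group_add \<Rightarrow> 'w"
    and t :: "'a \<Rightarrow> 'v \<Rightarrow> 'w"
    and piu :: "'a \<Rightarrow> 'w \<Rightarrow> 'w"
    and Su :: "'w \<Rightarrow> 'v"
  assumes sys: "linear_system sA sV phi"
    and dimV: "vector_space.dim sV UNIV = 1"
    and tens: "tensor_product sA sV sW t"
    and piu_lin: "\<forall>a. Vector_Spaces.linear sW sW (piu a)"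
    and piu_gen: "\<forall>a b x. piu a (t b x) = t (a * b) x"
    and Su_lin: "Vector_Spaces.linear sW sV Su"
    and Su_gen: "\<forall>a x. Su (t a x) = phi a x"
  shows "dilation_equiv sW UNIV piu Su (\<lambda>x. t 1 x)
           (fun_scale sV) (canon_space sV phi) canon_pi canon_S (canon_T phi)
         \<longleftrightarrow> \<not> (\<exists>J. left_ideal sA J \<and> J \<subseteq> ker_phi phi \<and> J \<noteq> {0})"
proof -
  have vsA: "vector_space sA" and Aall: "\<forall>c a b. sA c (a*b) = sA c a * b \<and> sA c (a*b) = a * sA c b"
    using sys unfolding linear_system_def unital_algebra_def by blast+
  have Amul1: "\<And>c a b. sA c (a*b) = sA c a * b" and Amul2: "\<And>c a b. sA c (a*b) = a * sA c b"
    using Aall by blast+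
  have vsV: "vector_space sV" and philin: "\<And>a. Vector_Spaces.linear sV sV (phi a)"
    and phiadd: "\<And>a b v. phi (a+b) v = phi a v + phi b v"
    and phiscale: "\<And>c a v. phi (sA c a) v = sV c (phi a v)" and phi1: "phi 1 = id"
    using sys unfolding linear_system_def by auto
  have phiv_add: "\<And>a x y. phi a (x+y) = phi a x + phi a y"
    and phiv_scale: "\<And>a c x. phi a (sV c x) = sV c (phi a x)"
    using philin unfolding linear_iff by auto
  have vsW: "vector_space sW" and tA: "\<And>x. Vector_Spaces.linear sA sW (\<lambda>a. t a x)"
    and tV: "\<And>a. Vector_Spaces.linear sV sW (t a)"
    and tspan: "module.span sW {t a x | a x. True} = UNIV"
    and tuniv: "\<And>\<beta>::'a\<Rightarrow>'v\<Rightarrow>'f. (\<forall>x. Vector_Spaces.linear sA (*) (\<lambda>a. \<beta> a x)) \<Longrightarrow>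
        (\<forall>a. Vector_Spaces.linear sV (*) (\<beta> a)) \<Longrightarrow>
        (\<exists>f. Vector_Spaces.linear sW (*) f \<and> (\<forall>a x. f (t a x) = \<beta> a x))"
    using tens unfolding tensor_product_def by auto
  have tA_add: "\<And>a b x. t (a+b) x = t a x + t b x"
    and tA_scale: "\<And>c a x. t (sA c a) x = sW c (t a x)"
    using tA unfolding linear_iff by auto
  have tV_scale: "\<And>a c x. t a (sV c x) = sW c (t a x)" using tV unfolding linear_iff by auto
  have vsF: "vector_space ((*) :: 'f \<Rightarrow> 'f \<Rightarrow> 'f)"
    by unfold_locales (auto simp: algebra_simps)
  interpret A: vector_space sA by fact
  interpret V: vector_space sV by fact
  interpret W: vector_space sW by fact
  interpret VF: vector_space_pair sV "(*) :: 'f \<Rightarrow> 'f \<Rightarrow> 'f"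
    by (intro vector_space_pair.intro vsV vsF)
  interpret AF: vector_space_pair sA "(*) :: 'f \<Rightarrow> 'f \<Rightarrow> 'f"
    by (intro vector_space_pair.intro vsA vsF)
  obtain B where B: "V.independent B" "UNIV \<subseteq> V.span B" "card B = V.dim UNIV"
    using V.basis_exists[of UNIV] by blast
  then obtain v0 where "B = {v0}" using dimV by (auto simp: card_Suc_eq)
  hence v0ind: "V.independent {v0}" and v0span: "\<And>v. \<exists>k. v = sV k v0"
    using B V.span_singleton by auto
  have v0nz: "v0 \<noteq> 0" using v0ind V.dependent_zero by auto
  obtain \<kappa> where kl: "Vector_Spaces.linear sV (*) \<kappa>" and k1: "\<kappa> v0 = 1"
    using VF.linear_independent_extend[OF v0ind, of "\<lambda>_. 1"] by auto
  have kscale: "\<And>c x. \<kappa> (sV c x) = c * \<kappa> x" using kl unfolding linear_iff by auto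
  have vdec: "\<And>v. v = sV (\<kappa> v) v0"
  proof -
    fix v obtain k where "v = sV k v0" using v0span by blast
    thus "v = sV (\<kappa> v) v0" using kscale k1 by simp
  qed
  define g where "g a = t a v0" for a
  have g_add: "g (a+b) = g a + g b" for a b using tA_add g_def by simp
  have g_scale: "g (sA c a) = sW c (g a)" for c a using tA_scale g_def by simp
  have t_g: "t a x = g (sA (\<kappa> x) a)" for a x
    by (metis g_def tA_scale tV_scale vdec)
  have g0: "g 0 = 0" by (metis A.scale_zero_left W.scale_zero_left g_scale)
  have g_surj: "surj g"
  proof -
    have "W.subspace (range g)"
    proof (rule W.subspaceI)
      show "0 \<in> range g" using g0 by (metis rangeI)
      fix x y assume "x \<in> range g" "y \<in> range g"
      then obtain a b where "x = g a" "y = g b" by blast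
      thus "x + y \<in> range g" by (metis g_add rangeI)
    next
      fix c x assume "x \<in> range g"
      then obtain a where "x = g a" by blast
      thus "sW c x \<in> range g" by (metis g_scale rangeI)
    qed
    moreover have "{t a x | a x. True} \<subseteq> range g" by (auto simp: t_g)
    ultimately have "W.span {t a x | a x. True} \<subseteq> range g"
      by (rule W.span_minimal[rotated])
    thus ?thesis using tspan by auto
  qed
  have g_inj0: "g a = 0 \<Longrightarrow> a = 0" for a
  proof (rule ccontr)
    assume ga: "g a = 0" and anz: "a \<noteq> 0"
    have "A.independent {a}" using anz by (simp add: A.independent_insert)
    then obtain \<mu> where ml: "Vector_Spaces.linear sA (*) \<mu>" and m1: "\<mu> a = 1"
      using AF.linear_independent_extend[of "{a}" "\<lambda>_. 1"] by auto
    have madd: "\<mu> (x+y) = \<mu> x + \<mu> y" and mscale: "\<mu> (sA c x) = c * \<mu> x" for x y c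
      using ml unfolding linear_iff by blast+
    have kadd: "\<kappa> (x+y) = \<kappa> x + \<kappa> y" for x y
      using kl unfolding linear_iff by blast
    have l1: "Vector_Spaces.linear sA (*) (\<lambda>a. \<mu> a * \<kappa> x)" for x
      unfolding linear_iff
    proof (intro conjI allI vsA vsF)
      fix y z c show "\<mu> (y + z) * \<kappa> x = \<mu> y * \<kappa> x + \<mu> z * \<kappa> x"
        by (simp only: madd distrib_right)
      show "\<mu> (sA c y) * \<kappa> x = c * (\<mu> y * \<kappa> x)"
        by (simp only: mscale mult.assoc)
    qed
    have l2: "Vector_Spaces.linear sV (*) (\<lambda>x. \<mu> a * \<kappa> x)" for a
      unfolding linear_iff
    proof (intro conjI allI vsV vsF)
      fix y z c show "\<mu> a * \<kappa> (y + z) = \<mu> a * \<kappa> y + \<mu> a * \<kappa> z"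
        by (simp only: kadd distrib_left)
      show "\<mu> a * \<kappa> (sV c y) = c * (\<mu> a * \<kappa> y)"
        by (simp only: kscale mult.left_commute)
    qed
    obtain f where fl: "Vector_Spaces.linear sW (*) f" and ft: "\<forall>a x. f (t a x) = \<mu> a * \<kappa> x"
      using tuniv[of "\<lambda>a x. \<mu> a * \<kappa> x"] l1 l2 by blast
    have "f (g a) = 1" using ft m1 k1 g_def by simp
    moreover have "f 0 = 0" using fl unfolding linear_iff by (metis W.scale_zero_left mult_zero_left)
    ultimately show False using ga by simp
  qed
  have g_inj: "inj g"
  proof (rule injI)
    fix a b assume "g a = g b"
    hence "g (a - b) = 0" using g_add[of "a-b" b] by simp
    hence "a - b = 0" by (rule g_inj0)
    thus "a = b" by simp
  qed
  have ginv1: "inv g (g a) = a" for a using g_inj by simp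
  have ginv2: "g (inv g w) = w" for w using g_surj by (simp add: surj_f_inv_f)
  have vsFun: "vector_space (fun_scale sV :: 'f \<Rightarrow> ('a \<Rightarrow> 'v) \<Rightarrow> ('a \<Rightarrow> 'v))"
    by unfold_locales (auto simp: fun_scale_def fun_eq_iff V.scale_right_distrib V.scale_left_distrib)
  interpret FS: vector_space "fun_scale sV :: 'f \<Rightarrow> ('a \<Rightarrow> 'v) \<Rightarrow> ('a \<Rightarrow> 'v)" by fact
  define \<alpha> where "\<alpha> a = canon_alpha phi a v0" for a
  have al_add: "\<alpha> (a+b) = \<alpha> a + \<alpha> b" for a b
    by (simp add: \<alpha>_def canon_alpha_def fun_eq_iff distrib_left phiadd)
  have al_scale: "\<alpha> (sA c a) = fun_scale sV c (\<alpha> a)" for c a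
    by (simp add: \<alpha>_def canon_alpha_def fun_eq_iff fun_scale_def Amul2[symmetric] phiscale)
  have al_gen: "canon_alpha phi a x = \<alpha> (sA (\<kappa> x) a)" for a x
  proof -
    have "phi (b * a) x = phi (b * sA (\<kappa> x) a) v0" for b
    proof -
      have "phi (b * a) x = phi (b * a) (sV (\<kappa> x) v0)" using vdec[of x] by simp
      also have "\<dots> = sV (\<kappa> x) (phi (b * a) v0)" by (rule phiv_scale)
      also have "\<dots> = phi (sA (\<kappa> x) (b * a)) v0" by (rule phiscale[symmetric])
      also have "\<dots> = phi (b * sA (\<kappa> x) a) v0" by (simp only: Amul2)
      finally show ?thesis .
    qed
    thus ?thesis by (simp add: \<alpha>_def canon_alpha_def fun_eq_iff)
  qed
  have al_diff: "\<alpha> (a - b) = \<alpha> a - \<alpha> b" for a b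
    using al_add[of "a-b" b] by simp
  have phi0: "phi 0 v = 0" for v
  proof -
    have "phi 0 v = phi (sA 0 0) v" by simp
    also have "\<dots> = sV 0 (phi 0 v)" by (rule phiscale)
    finally show ?thesis by simp
  qed
  define N where "N = {a. \<forall>b. phi (b*a) v0 = 0}"
  have al0: "\<alpha> a = 0 \<longleftrightarrow> a \<in> N" for a
    by (simp add: \<alpha>_def canon_alpha_def N_def fun_eq_iff)
  have N_ideal: "left_ideal sA N"
    unfolding left_ideal_def
  proof (intro conjI allI impI A.subspaceI)
    show "0 \<in> N" by (simp add: N_def phi0)
    fix x y assume "x \<in> N" "y \<in> N"
    thus "x + y \<in> N" by (simp add: N_def distrib_left phiadd)
  next
    fix c x assume "x \<in> N"
    thus "sA c x \<in> N" by (simp add: N_def Amul2[symmetric] phiscale)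
  next
    fix a j assume "j \<in> N"
    thus "a * j \<in> N" by (simp add: N_def mult.assoc[symmetric])
  qed
  have N_ker: "N \<subseteq> ker_phi phi"
  proof
    fix a assume "a \<in> N"
    hence "phi (1 * a) v0 = 0" unfolding N_def by blast
    hence pa: "phi a v0 = 0" by simp
    have "phi a v = 0" for v
    proof -
      have "phi a v = phi a (sV (\<kappa> v) v0)" using vdec[of v] by simp
      also have "\<dots> = sV (\<kappa> v) (phi a v0)" by (rule phiv_scale)
      finally show ?thesis using pa by simp
    qed
    thus "a \<in> ker_phi phi" by (simp add: ker_phi_def)
  qed
  have canon_eq: "canon_space sV phi = range \<alpha>"
  proof
    have "FS.subspace (range \<alpha>)"
    proof (rule FS.subspaceI)
      have "\<alpha> 0 = 0" using al0 N_def phi0 by simp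
      thus "0 \<in> range \<alpha>" by (metis rangeI)
      fix x y assume "x \<in> range \<alpha>" "y \<in> range \<alpha>"
      then obtain a b where "x = \<alpha> a" "y = \<alpha> b" by blast
      thus "x + y \<in> range \<alpha>" using al_add[of a b] by (metis rangeI)
    next
      fix c x assume "x \<in> range \<alpha>"
      then obtain a where "x = \<alpha> a" by blast
      thus "fun_scale sV c x \<in> range \<alpha>" using al_scale[of c a] by (metis rangeI)
    qed
    moreover have "{canon_alpha phi a x | a x. True} \<subseteq> range \<alpha>" by (auto simp: al_gen)
    ultimately show "canon_space sV phi \<subseteq> range \<alpha>"
      unfolding canon_space_def by (rule FS.span_minimal[rotated])
    have "range \<alpha> \<subseteq> {canon_alpha phi a x | a x. True}" by (auto simp: \<alpha>_def)
    thus "range \<alpha> \<subseteq> canon_space sV phi"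
      unfolding canon_space_def using FS.span_superset by blast
  qed
  show ?thesis
  proof
    assume "dilation_equiv sW UNIV piu Su (\<lambda>x. t 1 x)
           (fun_scale sV) (canon_space sV phi) canon_pi canon_S (canon_T phi)"
    then obtain R where Rb: "bij_betw R UNIV (canon_space sV phi)"
      and Radd: "\<And>u w. R (u + w) = R u + R w"
      and RT: "\<And>x. R (t 1 x) = canon_T phi x"
      and Rpi: "\<And>a w. piu a w = inv_into UNIV R (canon_pi a (R w))"
      unfolding dilation_equiv_def by blast
    have R0: "R 0 = 0" using Radd[of 0 0] by simp
    have Rinj: "inj R" using Rb bij_betw_def by blast
    show "\<not> (\<exists>J. left_ideal sA J \<and> J \<subseteq> ker_phi phi \<and> J \<noteq> {0})"
    proof
      assume "\<exists>J. left_ideal sA J \<and> J \<subseteq> ker_phi phi \<and> J \<noteq> {0}"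
      then obtain J where J: "left_ideal sA J" "J \<subseteq> ker_phi phi" "J \<noteq> {0}" by blast
      have "0 \<in> J" using J(1) unfolding left_ideal_def A.subspace_def by blast
      then obtain j where j: "j \<in> J" "j \<noteq> 0" using J(3) by blast
      have "b * j \<in> J" for b using J(1) j(1) unfolding left_ideal_def by blast
      hence bj: "phi (b * j) v0 = 0" for b using J(2) by (auto simp: ker_phi_def)
      have "canon_pi j (R (t 1 v0)) = 0"
        by (simp add: RT canon_T_def canon_pi_def canon_alpha_def fun_eq_iff bj)
      hence "piu j (t 1 v0) = inv_into UNIV R (R 0)" using Rpi[of j "t 1 v0"] R0 by simp
      hence "piu j (t 1 v0) = 0" using inv_into_f_f[OF Rinj, of 0] by simp
      hence "g j = 0" using piu_gen g_def by simp
      thus False using g_inj0 j(2) by blast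
    qed
  next
    assume noJ: "\<not> (\<exists>J. left_ideal sA J \<and> J \<subseteq> ker_phi phi \<and> J \<noteq> {0})"
    hence N0: "N = {0}" using N_ideal N_ker by blast
    define R where "R w = \<alpha> (inv g w)" for w
    have al_inj: "inj \<alpha>"
    proof (rule injI)
      fix a b assume "\<alpha> a = \<alpha> b"
      hence "\<alpha> (a - b) = 0" using al_diff[of a b] by simp
      hence "a - b \<in> N" using al0 by blast
      thus "a = b" using N0 by simp
    qed
    have Rg: "R (g a) = \<alpha> a" for a by (simp add: R_def ginv1)
    have Rinj: "inj R"
    proof (rule injI)
      fix u w assume "R u = R w"
      hence "inv g u = inv g w" using injD[OF al_inj] unfolding R_def by blast
      hence "g (inv g u) = g (inv g w)" by simp
      thus "u = w" by (simp add: ginv2)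
    qed
    have Rrange: "range R = canon_space sV phi"
      unfolding canon_eq
    proof (intro subset_antisym subsetI)
      fix x assume "x \<in> range R" thus "x \<in> range \<alpha>" by (auto simp: R_def)
    next
      fix x assume "x \<in> range \<alpha>"
      then obtain a where "x = \<alpha> a" by blast
      hence "x = R (g a)" by (simp add: Rg)
      thus "x \<in> range R" by blast
    qed
    have invg_add: "inv g (u + w) = inv g u + inv g w" for u w
      by (rule injD[OF g_inj]) (simp add: g_add ginv2)
    have invg_scale: "inv g (sW c u) = sA c (inv g u)" for c u
      by (rule injD[OF g_inj]) (simp add: g_scale ginv2)
    show "dilation_equiv sW UNIV piu Su (\<lambda>x. t 1 x)
           (fun_scale sV) (canon_space sV phi) canon_pi canon_S (canon_T phi)"
      unfolding dilation_equiv_def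
    proof (intro exI[of _ R] conjI ballI allI)
      show "bij_betw R UNIV (canon_space sV phi)" using Rinj Rrange by (simp add: bij_betw_def)
      fix u w show "R (u + w) = R u + R w" by (simp add: R_def invg_add al_add)
    next
      fix c u show "R (sW c u) = fun_scale sV c (R u)" by (simp add: R_def invg_scale al_scale)
    next
      fix x show "R (t 1 x) = canon_T phi x"
        by (simp add: t_g Rg canon_T_def al_gen)
    next
      fix w
      obtain a where w: "w = g a" using ginv2[of w] by metis
      have "Su w = phi a v0" using Su_gen by (simp add: w g_def)
      thus "canon_S (R w) = Su w"
        by (simp add: w Rg canon_S_def \<alpha>_def canon_alpha_def)
    next
      fix a w
      obtain b where w: "w = g b" using ginv2[of w] by metis
      have "canon_pi a (R w) = R (g (a * b))"
        by (simp add: w Rg \<alpha>_def canon_alpha_def canon_pi_def mult.assoc)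
      moreover have "piu a w = g (a * b)" using piu_gen by (simp add: w g_def)
      ultimately show "piu a w = inv_into UNIV R (canon_pi a (R w))"
        using Rinj by (simp add: inv_into_f_f)
    qed
  qed
qed

end
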